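(* For every $\varepsilon\in(0,2)$ there exists $\varepsilon'\in(0,2)$ such that the following holds: if $f:[0,\infty)\to[0,\infty)$ is a monotone function belonging to the Gurov–Reshetnyak class $\mathcal{GR}_{\mathbb R_+}(\varepsilon)$, then its even extension $\tilde f:\mathbb R\to[0,\infty)$, $\tilde f(x)=f(|x|)$, belongs to $\mathcal{GR}_{\mathbb R}(\varepsilon')$.
   Context: Let $R$ be either $\mathbb R$ or $\mathbb R_+=[0,\infty)$. For a non-negative function $f$ that is locally summable on $R$ (i.e. summable on each bounded subinterval of $R$) and a bounded interval $I\subset R$, put $f_I=\frac1{|I|}\int_I f(x)\,dx$ and $\Omega(f;I)=\frac1{|I|}\int_I|f(x)-f_I|\,dx$, where $|I|$ is the length of $I$. For $\varepsilon\in(0,2]$, the Gurov–Reshetnyak class $\mathcal{GR}_R(\varepsilon)$ is the set of all non-negative locally summable functions $f$ on $R$ such that $\Omega(f;I)\le\varepsilon f_I$ for all bounded intervals $I\subset R$. *)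

theory Defs
  imports "HOL-Analysis.Analysis"
begin

definition avg :: "(real \<Rightarrow> real) \<Rightarrow> real \<Rightarrow> real \<Rightarrow> real" where
  "avg f a b = (LINT x:{a..b}|lborel. f x) / (b - a)"

definition mean_osc :: "(real \<Rightarrow> real) \<Rightarrow> real \<Rightarrow> real \<Rightarrow> real" where
  "mean_osc f a b = (LINT x:{a..b}|lborel. \<bar>f x - avg f a b\<bar>) / (b - a)"

text \<open>Endpoints have measure zero, so closed intervals suffice.\<close>
definition GR :: "real set \<Rightarrow> real \<Rightarrow> (real \<Rightarrow> real) \<Rightarrow> bool" where
  "GR R eps f \<longleftrightarrow>
     (\<forall>x\<in>R. 0 \<le> f x) \<and>
     (\<forall>a b. a \<in> R \<longrightarrow> b \<in> R \<longrightarrow> set_integrable lborel {a..b} f) \<and>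
     (\<forall>a b. a \<in> R \<longrightarrow> b \<in> R \<longrightarrow> a < b \<longrightarrow> mean_osc f a b \<le> eps * avg f a b)"

end

theory Submission imports Defs begin

lemma const_int: "set_integrable lborel {a::real..b} (\<lambda>x. c::real)"
  by (intro borel_integrable_atLeastAtMost' continuous_on_const)

lemma const_LINT: "(a::real) \<le> b \<Longrightarrow> (LINT x:{a..b}|lborel. (c::real)) = c*(b-a)"
  by (subst set_integral_const) (auto simp: measure_lborel_Icc)

lemma min_int:
  fixes g :: "real \<Rightarrow> real"
  assumes g: "set_integrable lborel {a..b} g" and ab: "a \<le> b"
  shows "set_integrable lborel {a..b} (\<lambda>x. min (g x) c)"
    and "(LINT x:{a..b}|lborel. min (g x) c) =
          ((LINT x:{a..b}|lborel. g x) + c*(b-a) - (LINT x:{a..b}|lborel. \<bar>g x - c\<bar>)) / 2"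
proof -
  have eq: "(\<lambda>x. min (g x) c) = (\<lambda>x. (1/2) * ((g x + c) - \<bar>g x - c\<bar>))"
    by (auto simp: min_def fun_eq_iff)
  have i1: "set_integrable lborel {a..b} (\<lambda>x. g x + c)"
    using g const_int by (rule set_integral_add(1))
  have i2: "set_integrable lborel {a..b} (\<lambda>x. \<bar>g x - c\<bar>)"
    by (rule set_integrable_abs, rule set_integral_diff(1)[OF g const_int])
  show "set_integrable lborel {a..b} (\<lambda>x. min (g x) c)"
    unfolding eq by (rule set_integrable_mult_right, rule set_integral_diff(1)[OF i1 i2])
  have "(LINT x:{a..b}|lborel. min (g x) c) = (1/2) * ((LINT x:{a..b}|lborel. g x + c) - (LINT x:{a..b}|lborel. \<bar>g x - c\<bar>))"
    unfolding eq using i1 i2 by (simp add: set_integral_diff(2))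
  also have "(LINT x:{a..b}|lborel. g x + c) = (LINT x:{a..b}|lborel. g x) + c*(b-a)"
    using g const_int const_LINT[OF ab] by (simp add: set_integral_add(2))
  finally show "(LINT x:{a..b}|lborel. min (g x) c) =
          ((LINT x:{a..b}|lborel. g x) + c*(b-a) - (LINT x:{a..b}|lborel. \<bar>g x - c\<bar>)) / 2"
    by simp
qed

lemma int_mono_set:
  fixes h :: "real \<Rightarrow> real"
  assumes "K \<subseteq> J" "set_integrable M J h" "set_integrable M K h" "\<And>x. x \<in> J \<Longrightarrow> 0 \<le> h x"
  shows "(LINT x:K|M. h x) \<le> (LINT x:J|M. h x)"
  using assms unfolding set_lebesgue_integral_def set_integrable_def
  by (intro integral_mono) (auto split: split_indicator)

lemma int_nonneg:
  fixes h :: "real \<Rightarrow> real"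
  assumes "set_integrable lborel {a..b} h" "\<And>x. x \<in> {a..b} \<Longrightarrow> 0 \<le> h x" "a \<le> b"
  shows "0 \<le> (LINT x:{a..b}|lborel. h x)"
proof -
  have "(LINT x:{a..b}|lborel. (0::real)) \<le> (LINT x:{a..b}|lborel. h x)"
    using assms const_int by (intro set_integral_mono) auto
  then show ?thesis using const_LINT[OF assms(3), of 0] by simp
qed


lemma osc_iff:
  fixes g :: "real \<Rightarrow> real"
  assumes ab: "a < b" and g: "set_integrable lborel {a..b} g"
  shows "mean_osc g a b \<le> e * avg g a b \<longleftrightarrow>
         (1 - e/2) * (LINT x:{a..b}|lborel. g x) \<le> (LINT x:{a..b}|lborel. min (g x) (avg g a b))"
proof -
  define I where "I = (LINT x:{a..b}|lborel. g x)"
  define m where "m = avg g a b"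
  define Os where "Os = (LINT x:{a..b}|lborel. \<bar>g x - m\<bar>)"
  have mI: "m * (b - a) = I" using ab by (simp add: m_def avg_def I_def)
  have L: "(LINT x:{a..b}|lborel. min (g x) m) = (I + I - Os) / 2"
    using min_int(2)[OF g, of m] ab mI by (simp add: I_def Os_def)
  have "mean_osc g a b \<le> e * avg g a b \<longleftrightarrow> Os / (b-a) \<le> e * (I / (b-a))"
    by (simp add: mean_osc_def Os_def m_def avg_def I_def)
  also have "\<dots> \<longleftrightarrow> Os / (b-a) \<le> (e * I) / (b-a)" by simp
  also have "\<dots> \<longleftrightarrow> Os \<le> e * I" using ab by (simp add: divide_le_cancel)
  also have "\<dots> \<longleftrightarrow> (1 - e/2) * I \<le> (I + I - Os) / 2" by (simp add: field_simps)
  finally show ?thesis using L by (simp only: I_def m_def)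
qed

lemma comb:
  fixes g :: "real \<Rightarrow> real"
  assumes cd: "c < d" and ac: "a \<le> c" and db: "d \<le> b" and len: "b - a \<le> 2*(d-c)"
    and g: "set_integrable lborel {a..b} g" and nn: "\<And>x. x \<in> {a..b} \<Longrightarrow> 0 \<le> g x"
    and II: "(LINT x:{a..b}|lborel. g x) \<le> 2 * (LINT x:{c..d}|lborel. g x)"
    and dl: "0 \<le> \<delta>"
    and K: "\<delta> * (LINT x:{c..d}|lborel. g x) \<le> (LINT x:{c..d}|lborel. min (g x) (avg g c d))"
  shows "(\<delta>/2) * (LINT x:{a..b}|lborel. g x) \<le> (LINT x:{a..b}|lborel. min (g x) (avg g a b))"
proof -
  define IJ where "IJ = (LINT x:{a..b}|lborel. g x)"
  define IK where "IK = (LINT x:{c..d}|lborel. g x)"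
  define m where "m = avg g a b"
  define M where "M = avg g c d"
  have sub: "{c..d} \<subseteq> {a..b}" using ac db by auto
  have gK: "set_integrable lborel {c..d} g" using set_integrable_subset[OF g _ sub] by simp
  have IJ0: "0 \<le> IJ" unfolding IJ_def using int_nonneg[OF g nn] ac cd db by simp
  have IK0: "0 \<le> IK" unfolding IK_def using int_nonneg[OF gK] nn sub cd by force
  have mIJ: "m * (b-a) = IJ" using ac cd db by (simp add: m_def avg_def IJ_def)
  have MIK: "M * (d-c) = IK" using cd by (simp add: M_def avg_def IK_def)
  have m0: "0 \<le> m" using IJ0 ac cd db by (simp add: m_def avg_def IJ_def)
  have step1: "(LINT x:{c..d}|lborel. min (g x) m) \<le> (LINT x:{a..b}|lborel. min (g x) m)"
    by (rule int_mono_set[OF sub min_int(1)[OF g] min_int(1)[OF gK]]) (use ac cd db nn m0 in auto)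
  have "(\<delta>/2) * IJ \<le> (LINT x:{c..d}|lborel. min (g x) m)"
  proof (cases "M \<le> m")
    case True
    have "(LINT x:{c..d}|lborel. min (g x) M) \<le> (LINT x:{c..d}|lborel. min (g x) m)"
      by (rule set_integral_mono[OF min_int(1)[OF gK] min_int(1)[OF gK]]) (use True cd in auto)
    moreover have "(\<delta>/2) * IJ \<le> \<delta> * IK" using II dl IK_def IJ_def
      by (metis mult.commute mult_left_mono divide_le_eq_numeral1(1) mult.left_commute times_divide_eq_right)
    ultimately show ?thesis using K by (simp add: IK_def M_def)
  next
    case False
    note Mm = this
    then have M0: "0 < M" using m0 by simp
    have "(LINT x:{c..d}|lborel. (m/M) * min (g x) M) \<le> (LINT x:{c..d}|lborel. min (g x) m)"
    proof (rule set_integral_mono)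
      show "set_integrable lborel {c..d} (\<lambda>x. m / M * min (g x) M)"
        by (rule set_integrable_mult_right, rule min_int(1)[OF gK]) (use cd in auto)
      show "set_integrable lborel {c..d} (\<lambda>x. min (g x) m)"
        by (rule min_int(1)[OF gK]) (use cd in auto)
      fix x assume x: "x \<in> {c..d}"
      then have gx: "0 \<le> g x" using nn sub by auto
      have q0: "0 \<le> m/M" "m/M \<le> 1" using m0 M0 False by auto
      show "m / M * min (g x) M \<le> min (g x) m"
      proof (cases "g x \<le> M")
        case True
        then have "m / M * min (g x) M = m/M * g x" by simp
        moreover have "m/M * g x \<le> g x" using q0 gx mult_left_le_one_le by blast
        moreover have "m/M * g x \<le> m/M * M" using True q0 by (intro mult_left_mono) auto
        ultimately show ?thesis using M0 by auto
      next
        case False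
        then show ?thesis using M0 Mm by auto
      qed
    qed
    moreover have "(LINT x:{c..d}|lborel. (m/M) * min (g x) M) = (m/M) * (LINT x:{c..d}|lborel. min (g x) M)"
      by simp
    moreover have "(m/M) * (\<delta> * IK) \<le> (m/M) * (LINT x:{c..d}|lborel. min (g x) M)"
      using K m0 M0 by (intro mult_left_mono) (auto simp: IK_def M_def)
    moreover have "(m/M) * (\<delta> * IK) = \<delta> * m * (d - c)" using M0 by (subst MIK[symmetric]) (simp add: field_simps)
    moreover have "(\<delta>/2) * IJ \<le> \<delta> * m * (d - c)"
    proof -
      have "m * (b-a) \<le> m * (2*(d-c))" using len m0 by (rule mult_left_mono)
      then have "\<delta> * (m * (b-a)) \<le> \<delta> * (m * (2*(d-c)))" using dl by (rule mult_left_mono)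
      then show ?thesis using mIJ by (simp add: algebra_simps)
    qed
    ultimately show ?thesis by linarith
  qed
  then show ?thesis using step1 by (simp add: IJ_def m_def)
qed


lemma refl_int:
  fixes F f :: "real \<Rightarrow> real"
  assumes "d \<le> 0"
  shows "(LINT x:{c..d}|lborel. F (f \<bar>x\<bar>)) = (LINT x:{-d..-c}|lborel. F (f x))"
proof -
  have "(LINT x:{c..d}|lborel. F (f \<bar>x\<bar>)) = (LINT x:{x. -x \<in> {c..d}}|lborel. F (f \<bar>-x\<bar>))"
    by (rule set_integral_reflect)
  also have "{x. -x \<in> {c..d}} = {-d..-c}" by auto
  also have "(LINT x:{-d..-c}|lborel. F (f \<bar>-x\<bar>)) = (LINT x:{-d..-c}|lborel. F (f x))"
    by (rule set_lebesgue_integral_cong) (use assms in auto)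
  finally show ?thesis .
qed

lemma refl_integrable:
  fixes F f :: "real \<Rightarrow> real"
  assumes "d \<le> 0" and i: "set_integrable lborel {-d..-c} (\<lambda>x. F (f x))"
  shows "set_integrable lborel {c..d} (\<lambda>x. F (f \<bar>x\<bar>))"
proof -
  have "integrable lborel (\<lambda>x. (\<lambda>x. indicator {-d..-c} x *\<^sub>R F (f x)) (0 + (-1) * x))"
    using i unfolding set_integrable_def by (subst lborel_integrable_real_affine_iff) auto
  moreover have "(\<lambda>x. (\<lambda>x. indicator {-d..-c} x *\<^sub>R F (f x)) (0 + (-1) * x))
      = (\<lambda>x. indicator {c..d} x *\<^sub>R F (f \<bar>x\<bar>))"
    using assms(1) by (auto simp: fun_eq_iff split: split_indicator)
  ultimately show ?thesis unfolding set_integrable_def by simp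
qed

lemma split_int:
  fixes h :: "real \<Rightarrow> real"
  assumes "a \<le> 0" "0 \<le> b" "set_integrable lborel {a..0} h" "set_integrable lborel {0..b} h"
  shows "(LINT x:{a..b}|lborel. h x) = (LINT x:{a..0}|lborel. h x) + (LINT x:{0..b}|lborel. h x)"
proof -
  have "{a..b} = {a..0} \<union> {0..b}" using assms by auto
  moreover have "(LINT x:{a..0} \<union> {0..b}|lborel. h x) = (LINT x:{a..0}|lborel. h x) + (LINT x:{0..b}|lborel. h x)"
    by (rule set_integral_Un_AE) (use assms AE_lborel_singleton[of 0] in \<open>auto elim: eventually_mono\<close>)
  ultimately show ?thesis by simp
qed


theorem lemma2p1:
  fixes eps :: real
  assumes "0 < eps" and "eps < 2"
  shows "\<exists>eps'. 0 < eps' \<and> eps' < 2 \<and>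
           (\<forall>f :: real \<Rightarrow> real.
              (mono_on {0..} f \<or> antimono_on {0..} f) \<and> GR {0..} eps f
              \<longrightarrow> GR UNIV eps' (\<lambda>x. f \<bar>x\<bar>))"
proof -
  define \<delta> where "\<delta> = 1 - eps/2"
  have \<delta>0: "0 \<le> \<delta>" using assms by (simp add: \<delta>_def)
  show ?thesis
  proof (intro exI[of _ "1 + eps/2"] conjI allI impI)
    show "0 < 1 + eps/2" "1 + eps/2 < 2" using assms by auto
    fix f :: "real \<Rightarrow> real"
    assume H: "(mono_on {0..} f \<or> antimono_on {0..} f) \<and> GR {0..} eps f"
    then have nn: "\<And>x. 0 \<le> x \<Longrightarrow> 0 \<le> f x"
      and fi: "\<And>a b. 0 \<le> a \<Longrightarrow> 0 \<le> b \<Longrightarrow> set_integrable lborel {a..b} f"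
      and fo: "\<And>a b. 0 \<le> a \<Longrightarrow> 0 \<le> b \<Longrightarrow> a < b \<Longrightarrow> mean_osc f a b \<le> eps * avg f a b"
      unfolding GR_def by auto
    define g where "g = (\<lambda>x. f \<bar>x\<bar>)"
    have gnn: "\<And>x. 0 \<le> g x" using nn by (simp add: g_def)
    have gpos_eq: "(LINT x:{c..d}|lborel. F (g x)) = (LINT x:{c..d}|lborel. F (f x))"
      if "0 \<le> c" for c d and F :: "real \<Rightarrow> real"
      by (rule set_lebesgue_integral_cong) (use that in \<open>auto simp: g_def\<close>)
    have gneg_eq: "(LINT x:{c..d}|lborel. F (g x)) = (LINT x:{-d..-c}|lborel. F (f x))"
      if "d \<le> 0" for c d and F :: "real \<Rightarrow> real"
      unfolding g_def by (rule refl_int[OF that])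
    have gi_pos: "set_integrable lborel {c..d} g" if "0 \<le> c" "0 \<le> d" for c d
      using fi[OF that] by (subst set_integrable_cong[of lborel lborel "{c..d}" "{c..d}" _ f]) (use that in \<open>auto simp: g_def\<close>)
    have gi_neg: "set_integrable lborel {c..d} g" if "c \<le> 0" "d \<le> 0" for c d
      unfolding g_def using refl_integrable[where F="\<lambda>y. y" and f=f and c=c and d=d] fi that by simp
    have gi: "set_integrable lborel {a..b} g" for a b
    proof -
      consider "0 \<le> a" "0 \<le> b" | "a \<le> 0" "b \<le> 0" | "b < 0" "0 \<le> a" | "a < 0" "0 < b" by linarith
      then show ?thesis
      proof cases
        case 3
        then show ?thesis using set_integrable_subset[OF gi_pos[of 0 0], of "{a..b}"] by auto
      next
        case 4
        have "set_integrable lborel ({a..0} \<union> {0..b}) g"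
          by (rule set_integrable_Un) (use 4 gi_pos gi_neg in auto)
        moreover have "{a..0} \<union> {0..b} = {a..b}" using 4 by auto
        ultimately show ?thesis by simp
      qed (use gi_pos gi_neg in auto)
    qed
    have K: "\<delta> * (LINT x:{c..d}|lborel. g x) \<le> (LINT x:{c..d}|lborel. min (g x) (avg g c d))"
      if cd: "c < d" and s: "0 \<le> c \<or> d \<le> 0" for c d
      using s
    proof
      assume c0: "0 \<le> c"
      have e1: "(LINT x:{c..d}|lborel. g x) = (LINT x:{c..d}|lborel. f x)"
        using gpos_eq[where F="\<lambda>y. y", OF c0] by simp
      have av: "avg g c d = avg f c d" by (simp add: avg_def e1)
      have e2: "(LINT x:{c..d}|lborel. min (g x) (avg g c d)) = (LINT x:{c..d}|lborel. min (f x) (avg f c d))"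
        using gpos_eq[where F="\<lambda>y. min y (avg f c d)", OF c0] av by simp
      show ?thesis unfolding e1 e2 \<delta>_def
        using osc_iff[OF cd fi] fo[OF c0 _ cd] c0 cd by auto
    next
      assume d0: "d \<le> 0"
      have cd': "-d < -c" "0 \<le> -d" "0 \<le> -c" using cd d0 by auto
      have e1: "(LINT x:{c..d}|lborel. g x) = (LINT x:{-d..-c}|lborel. f x)"
        using gneg_eq[where F="\<lambda>y. y", OF d0] by simp
      have av: "avg g c d = avg f (-d) (-c)" by (simp add: avg_def e1)
      have e2: "(LINT x:{c..d}|lborel. min (g x) (avg g c d)) = (LINT x:{-d..-c}|lborel. min (f x) (avg f (-d) (-c)))"
        using gneg_eq[where F="\<lambda>y. min y (avg f (-d) (-c))", OF d0] av by simp
      show ?thesis unfolding e1 e2 \<delta>_def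
        using osc_iff[OF cd'(1) fi[OF cd'(2,3)]] fo[OF cd'(2,3,1)] by auto
    qed
    have I0: "0 \<le> (LINT x:{c..d}|lborel. g x)" if "c \<le> d" for c d
      using int_nonneg[OF gi[of c d]] gnn that by auto
    have main: "(\<delta>/2) * (LINT x:{a..b}|lborel. g x) \<le> (LINT x:{a..b}|lborel. min (g x) (avg g a b))"
      if ab: "a < b" for a b
    proof -
      consider "0 \<le> a \<or> b \<le> 0" | "a < 0" "0 < b" "-a \<le> b" | "a < 0" "0 < b" "b < -a" by linarith
      then show ?thesis
      proof cases
        case 1
        show ?thesis
          by (rule comb[OF ab order_refl order_refl _ gi _ _ \<delta>0 K[OF ab 1]])
             (use ab gnn I0[of a b] in auto)
      next
        case 2
        have sp: "(LINT x:{a..b}|lborel. g x) = (LINT x:{a..0}|lborel. g x) + (LINT x:{0..b}|lborel. g x)"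
          by (rule split_int) (use 2 gi in auto)
        have "(LINT x:{a..0}|lborel. g x) = (LINT x:{0..-a}|lborel. f x)"
          using gneg_eq[where F="\<lambda>y. y" and c=a and d=0] by simp
        also have "\<dots> = (LINT x:{0..-a}|lborel. g x)"
          using gpos_eq[where F="\<lambda>y. y" and c=0 and d="-a"] by simp
        also have "\<dots> \<le> (LINT x:{0..b}|lborel. g x)"
          by (rule int_mono_set[OF _ gi gi]) (use 2 gnn in auto)
        finally have "(LINT x:{a..b}|lborel. g x) \<le> 2 * (LINT x:{0..b}|lborel. g x)" using sp by simp
        note II = this
        have Kb: "\<delta> * (LINT x:{0..b}|lborel. g x) \<le> (LINT x:{0..b}|lborel. min (g x) (avg g 0 b))"
          using K[of 0 b] 2 by auto
        show ?thesis
          by (rule comb[OF _ _ order_refl _ gi _ II \<delta>0 Kb]) (use 2 gnn in auto)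
      next
        case 3
        have sp: "(LINT x:{a..b}|lborel. g x) = (LINT x:{a..0}|lborel. g x) + (LINT x:{0..b}|lborel. g x)"
          by (rule split_int) (use 3 gi in auto)
        have "(LINT x:{0..b}|lborel. g x) \<le> (LINT x:{0..-a}|lborel. g x)"
          by (rule int_mono_set[OF _ gi gi]) (use 3 gnn in auto)
        also have "\<dots> = (LINT x:{0..-a}|lborel. f x)"
          using gpos_eq[where F="\<lambda>y. y" and c=0 and d="-a"] by simp
        also have "\<dots> = (LINT x:{a..0}|lborel. g x)"
          using gneg_eq[where F="\<lambda>y. y" and c=a and d=0] by simp
        finally have "(LINT x:{a..b}|lborel. g x) \<le> 2 * (LINT x:{a..0}|lborel. g x)" using sp by simp
        note II = this
        have Ka: "\<delta> * (LINT x:{a..0}|lborel. g x) \<le> (LINT x:{a..0}|lborel. min (g x) (avg g a 0))"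
          using K[of a 0] 3 by auto
        show ?thesis
          by (rule comb[OF _ order_refl _ _ gi _ II \<delta>0 Ka]) (use 3 gnn in auto)
      qed
    qed
    show "GR UNIV (1 + eps/2) (\<lambda>x. f \<bar>x\<bar>)"
      unfolding GR_def g_def[symmetric]
    proof (intro conjI ballI allI impI)
      show "0 \<le> g x" for x by (rule gnn)
      show "set_integrable lborel {a..b} g" for a b by (rule gi)
      fix a b :: real assume ab: "a < b"
      have e: "1 - (1 + eps/2)/2 = \<delta>/2" by (simp add: \<delta>_def field_simps)
      show "mean_osc g a b \<le> (1 + eps / 2) * avg g a b"
        unfolding osc_iff[OF ab gi] e by (rule main[OF ab])
    qed
  qed
qed

end
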